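(* Let $\mathbb{A}=(A,\backslash,/)$ be a residuation algebra. The following are equivalent: (1) The dual structure $\mathbb{A}^\delta_+$ is functional, i.e. $y\cdot z\in J^\infty(A^\delta)\cup\{\bot\}$ for all $y,z\in J^\infty(A^\delta)$. (2) For all $a,b,c\in A$ and all $x\in J^\infty(A^\delta)$ with $x\leq a$, there exists $a'\in A$ such that $x\leq a'$ and $a\backslash(b\vee c)\leq(a'\backslash b)\vee(a'\backslash c)$. (3) For all $x\in J^\infty(A^\delta)$, the map $x\backslash^\pi(\_):O(A^\delta)\to O(A^\delta)$ preserves binary joins, i.e. $x\backslash^\pi(o_1\vee o_2)=(x\backslash^\pi o_1)\vee(x\backslash^\pi o_2)$ for all $o_1,o_2\in O(A^\delta)$.
   Context: A residuation algebra is a structure $(A,\backslash,/)$ where $A$ is a bounded distributive lattice and $\backslash,/$ are binary operations on $A$ such that $\backslash$ preserves finite (including empty) meets in its second coordinate, $/$ preserves finite (including empty) meets in its first coordinate, and for all $a,b,c\in A$: $b\leq a\backslash c$ iff $a\leq c/b$. The canonical extension $A^\delta$ of $A$ is the complete lattice containing $A$ as a sublattice that is dense (every element is a join of meets and a meet of joins of elements of $A$) and compact (if $\bigwedge S\leq\bigvee T$ for $S,T\subseteq A$ then this holds for some finite subsets). Let $K(A^\delta)$ (resp. $O(A^\delta)$) be the set of meets (resp. joins) of subsets of $A$. The $\pi$-extension of $\backslash$ is: for $k\in K(A^\delta)$, $o\in O(A^\delta)$, $k\backslash^\pi o=\bigvee\{a\backslash b\mid a,b\in A,\ k\leq a,\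 b\leq o\}$, and for arbitrary $u,v\in A^\delta$, $u\backslash^\pi v=\bigwedge\{k\backslash^\pi o\mid k\in K(A^\delta), o\in O(A^\delta), k\leq u, v\leq o\}$; $/^\pi$ is defined symmetrically ($/$ being monotone in the first and antitone in the second coordinate). There is a binary operation $\cdot$ on $A^\delta$ such that for all $u,v,w\in A^\delta$: $v\leq u\backslash^\pi w$ iff $u\cdot v\leq w$ iff $u\leq w/^\pi v$. $J^\infty(A^\delta)$ is the set of completely join-irreducible elements of $A^\delta$ (those $x$ with $x=\bigvee S\Rightarrow x\in S$ for all $S\subseteq A^\delta$). The dual structure $\mathbb{A}^\delta_+$ is $(J^\infty(A^\delta),\geq,R)$ with $R(x,y,z)$ iff $x\leq y\cdot z$. *)

theory Defs
  imports Main
begin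

definition residuation_algebra ::
  "('a::{distrib_lattice,bounded_lattice} \<Rightarrow> 'a \<Rightarrow> 'a) \<Rightarrow> ('a \<Rightarrow> 'a \<Rightarrow> 'a) \<Rightarrow> bool" where
  "residuation_algebra ldiv rdiv \<longleftrightarrow>
     (\<forall>a. ldiv a top = top) \<and>
     (\<forall>a b c. ldiv a (inf b c) = inf (ldiv a b) (ldiv a c)) \<and>
     (\<forall>a. rdiv top a = top) \<and>
     (\<forall>a b c. rdiv (inf b c) a = inf (rdiv b a) (rdiv c a)) \<and>
     (\<forall>a b c. b \<le> ldiv a c \<longleftrightarrow> a \<le> rdiv c b)"

text \<open>Closed (K) and open (O) elements relative to the embedding e.\<close>
definition Kel :: "('a \<Rightarrow> 'c::complete_lattice) \<Rightarrow> 'c set" where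
  "Kel e = {Inf (e ` S) | S. True}"

definition Oel :: "('a \<Rightarrow> 'c::complete_lattice) \<Rightarrow> 'c set" where
  "Oel e = {Sup (e ` S) | S. True}"

definition canonical_extension ::
  "('a::{distrib_lattice,bounded_lattice} \<Rightarrow> 'c::complete_lattice) \<Rightarrow> bool" where
  "canonical_extension e \<longleftrightarrow>
     inj e \<and>
     (\<forall>a b. e (inf a b) = inf (e a) (e b)) \<and>
     (\<forall>a b. e (sup a b) = sup (e a) (e b)) \<and>
     e bot = bot \<and> e top = top \<and>
     (\<forall>u. (\<exists>X. X \<subseteq> Kel e \<and> u = Sup X) \<and> (\<exists>Y. Y \<subseteq> Oel e \<and> u = Inf Y)) \<and>
     (\<forall>S T. Inf (e ` S) \<le> Sup (e ` T) \<longrightarrow>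
        (\<exists>S' T'. finite S' \<and> S' \<subseteq> S \<and> finite T' \<and> T' \<subseteq> T \<and> Inf (e ` S') \<le> Sup (e ` T')))"

text \<open>pi-extension of the left residual (antitone in 1st, monotone in 2nd argument).\<close>
definition ldiv_KO :: "('a::order \<Rightarrow> 'c::complete_lattice) \<Rightarrow> ('a \<Rightarrow> 'a \<Rightarrow> 'a) \<Rightarrow> 'c \<Rightarrow> 'c \<Rightarrow> 'c" where
  "ldiv_KO e ldiv k p = Sup {e (ldiv a b) | a b. k \<le> e a \<and> e b \<le> p}"

definition ldiv_pi :: "('a::order \<Rightarrow> 'c::complete_lattice) \<Rightarrow> ('a \<Rightarrow> 'a \<Rightarrow> 'a) \<Rightarrow> 'c \<Rightarrow> 'c \<Rightarrow> 'c" where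
  "ldiv_pi e ldiv u v = Inf {ldiv_KO e ldiv k p | k p. k \<in> Kel e \<and> p \<in> Oel e \<and> k \<le> u \<and> v \<le> p}"

text \<open>pi-extension of the right residual (monotone in 1st, antitone in 2nd argument).\<close>
definition rdiv_OK :: "('a::order \<Rightarrow> 'c::complete_lattice) \<Rightarrow> ('a \<Rightarrow> 'a \<Rightarrow> 'a) \<Rightarrow> 'c \<Rightarrow> 'c \<Rightarrow> 'c" where
  "rdiv_OK e rdiv p k = Sup {e (rdiv b a) | b a. e b \<le> p \<and> k \<le> e a}"

definition rdiv_pi :: "('a::order \<Rightarrow> 'c::complete_lattice) \<Rightarrow> ('a \<Rightarrow> 'a \<Rightarrow> 'a) \<Rightarrow> 'c \<Rightarrow> 'c \<Rightarrow> 'c" where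
  "rdiv_pi e rdiv u v = Inf {rdiv_OK e rdiv p k | p k. p \<in> Oel e \<and> k \<in> Kel e \<and> u \<le> p \<and> k \<le> v}"

definition Jinf :: "'c::complete_lattice set" where
  "Jinf = {x. \<forall>S. x = Sup S \<longrightarrow> x \<in> S}"

end

theory Submission
  imports Defs
begin

lemma pft:
  fixes w :: "'a::{distrib_lattice,bounded_lattice}" and I :: "'a set"
  assumes I0: "bot \<in> I" and Isup: "\<And>x y. x \<in> I \<Longrightarrow> y \<in> I \<Longrightarrow> sup x y \<in> I"
    and Idown: "\<And>x y. x \<in> I \<Longrightarrow> y \<le> x \<Longrightarrow> y \<in> I" and wI: "w \<notin> I"
  shows "\<exists>F. w \<in> F \<and> top \<in> F \<and> (\<forall>x y. x\<in>F \<longrightarrow> y\<in>F \<longrightarrow> inf x y \<in> F)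
     \<and> (\<forall>x y. x \<in> F \<longrightarrow> x \<le> y \<longrightarrow> y \<in> F) \<and> F \<inter> I = {}
     \<and> (\<forall>x y. sup x y \<in> F \<longrightarrow> x \<in> F \<or> y \<in> F)"
proof -
  define Fam where "Fam = {F. w \<in> F \<and> (\<forall>x y. x\<in>F \<longrightarrow> y\<in>F \<longrightarrow> inf x y \<in> F)
     \<and> (\<forall>x y. x \<in> F \<longrightarrow> x \<le> y \<longrightarrow> y \<in> F) \<and> F \<inter> I = {}}"
  have "\<forall>C\<in>chains Fam. \<exists>U\<in>Fam. \<forall>X\<in>C. X \<subseteq> U"
  proof
    fix C assume C: "C \<in> chains Fam"
    show "\<exists>U\<in>Fam. \<forall>X\<in>C. X \<subseteq> U"
    proof (cases "C = {}")
      case True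
      have "{y. w \<le> y} \<in> Fam" unfolding Fam_def using wI Idown by (auto intro: order_trans)
      then show ?thesis using True by blast
    next
      case False
      have CF: "C \<subseteq> Fam" and ch: "\<forall>A\<in>C. \<forall>B\<in>C. A \<subseteq> B \<or> B \<subseteq> A"
        using C unfolding chains_def chain_subset_def by auto
      have "\<Union>C \<in> Fam"
        unfolding Fam_def
      proof (intro CollectI conjI allI impI)
        show "w \<in> \<Union>C" using False CF unfolding Fam_def by blast
      next
        fix x y assume "x \<in> \<Union>C" "y \<in> \<Union>C"
        then obtain A B where "A \<in> C" "B \<in> C" "x \<in> A" "y \<in> B" by blast
        then have "A \<subseteq> B \<or> B \<subseteq> A" using ch by blast
        moreover have "\<forall>x y. x\<in>A \<longrightarrow> y\<in>A \<longrightarrow> inf x y \<in> A" "\<forall>x y. x\<in>B \<longrightarrow> y\<in>B \<longrightarrow> inf x y \<in> B"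
          using CF \<open>A \<in> C\<close> \<open>B \<in> C\<close> unfolding Fam_def by blast+
        ultimately show "inf x y \<in> \<Union>C" using \<open>A \<in> C\<close> \<open>B \<in> C\<close> \<open>x \<in> A\<close> \<open>y \<in> B\<close> by blast
      next
        fix x y assume "x \<in> \<Union>C" "x \<le> y"
        then show "y \<in> \<Union>C" using CF unfolding Fam_def by blast
      next
        show "\<Union>C \<inter> I = {}" using CF unfolding Fam_def by blast
      qed
      then show ?thesis by blast
    qed
  qed
  from Zorn_Lemma2[OF this] obtain M where MF: "M \<in> Fam" and Mmax: "\<forall>X\<in>Fam. M \<subseteq> X \<longrightarrow> X = M"
    by blast
  have wM: "w \<in> M" and Minf: "\<And>x y. x\<in>M \<Longrightarrow> y\<in>M \<Longrightarrow> inf x y \<in> M"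
    and Mup: "\<And>x y. x \<in> M \<Longrightarrow> x \<le> y \<Longrightarrow> y \<in> M" and MI: "M \<inter> I = {}"
    using MF unfolding Fam_def by auto
  have topM: "top \<in> M" using wM Mup by auto
  have ext: "\<exists>m\<in>M. inf m x \<in> I" if xM: "x \<notin> M" for x
  proof (rule ccontr)
    assume nx: "\<not> (\<exists>m\<in>M. inf m x \<in> I)"
    define G where "G = {z. \<exists>m\<in>M. inf m x \<le> z}"
    have "G \<in> Fam" unfolding Fam_def
    proof (intro CollectI conjI allI impI)
      show "w \<in> G" unfolding G_def using wM by (auto intro: le_infI1)
    next
      fix a b assume "a \<in> G" "b \<in> G"
      then obtain m1 m2 where "m1 \<in> M" "m2 \<in> M" "inf m1 x \<le> a" "inf m2 x \<le> b" unfolding G_def by blast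
      then have "inf (inf m1 m2) x \<le> inf a b" by (meson inf.cobounded1 inf.cobounded2 le_inf_iff order_trans)
      then show "inf a b \<in> G" unfolding G_def using Minf \<open>m1 \<in> M\<close> \<open>m2 \<in> M\<close> by blast
    next
      fix a b assume "a \<in> G" "a \<le> b" then show "b \<in> G" unfolding G_def by (auto intro: order_trans)
    next
      show "G \<inter> I = {}"
      proof (rule ccontr)
        assume "G \<inter> I \<noteq> {}"
        then obtain z m where "z \<in> I" "m \<in> M" "inf m x \<le> z" unfolding G_def by blast
        then show False using nx Idown by blast
      qed
    qed
    moreover have "M \<subseteq> G" unfolding G_def by (auto intro: le_infI1)
    ultimately have "G = M" using Mmax by blast
    moreover have "x \<in> G" unfolding G_def using topM by auto
    ultimately show False using xM by blast
  qed
  have prime: "sup x y \<in> M \<Longrightarrow> x \<in> M \<or> y \<in> M" for x y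
  proof (rule ccontr)
    assume s: "sup x y \<in> M" and n: "\<not> (x \<in> M \<or> y \<in> M)"
    then obtain m1 m2 where m: "m1 \<in> M" "m2 \<in> M" "inf m1 x \<in> I" "inf m2 y \<in> I" using ext by blast
    define m where "m = inf (inf m1 m2) (sup x y)"
    have "m \<in> M" unfolding m_def using m s Minf by blast
    have "m = sup (inf (inf m1 m2) x) (inf (inf m1 m2) y)" unfolding m_def by (simp add: inf_sup_distrib1)
    also have "\<dots> \<le> sup (inf m1 x) (inf m2 y)" by (intro sup_mono inf_mono) auto
    finally have "m \<in> I" using Isup Idown m by blast
    then show False using \<open>m \<in> M\<close> MI by blast
  qed
  have A3: "\<forall>x y. x\<in>M \<longrightarrow> y\<in>M \<longrightarrow> inf x y \<in> M" using Minf by blast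
  have A4: "\<forall>x y. x \<in> M \<longrightarrow> x \<le> y \<longrightarrow> y \<in> M" using Mup by blast
  have A6: "\<forall>x y. sup x y \<in> M \<longrightarrow> x \<in> M \<or> y \<in> M" using prime by blast
  show ?thesis
    using wM topM A3 A4 MI A6 by (intro exI[of _ M] conjI) assumption+
qed




locale setting =
  fixes ldiv rdiv :: "'a::{distrib_lattice,bounded_lattice} \<Rightarrow> 'a \<Rightarrow> 'a"
    and e :: "'a \<Rightarrow> 'c::complete_lattice"
    and dot :: "'c \<Rightarrow> 'c \<Rightarrow> 'c"
  assumes RA: "residuation_algebra ldiv rdiv"
    and CE: "canonical_extension e"
    and dot_adj: "\<And>u v w. (v \<le> ldiv_pi e ldiv u w \<longleftrightarrow> dot u v \<le> w)
                          \<and> (dot u v \<le> w \<longleftrightarrow> u \<le> rdiv_pi e rdiv w v)"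
begin

lemma e_inf: "e (inf a b) = inf (e a) (e b)" using CE unfolding canonical_extension_def by blast
lemma e_sup: "e (sup a b) = sup (e a) (e b)" using CE unfolding canonical_extension_def by blast
lemma e_bot: "e bot = bot" using CE unfolding canonical_extension_def by blast
lemma e_top: "e top = top" using CE unfolding canonical_extension_def by blast
lemma e_inj: "inj e" using CE unfolding canonical_extension_def by blast
lemma dense_K: "\<exists>X. X \<subseteq> Kel e \<and> u = Sup X" using CE unfolding canonical_extension_def by blast
lemma dense_O: "\<exists>Y. Y \<subseteq> Oel e \<and> u = Inf Y" using CE unfolding canonical_extension_def by blast
lemma compact: "Inf (e ` S) \<le> Sup (e ` T) \<Longrightarrow>
        (\<exists>S' T'. finite S' \<and> S' \<subseteq> S \<and> finite T' \<and> T' \<subseteq> T \<and> Inf (e ` S') \<le> Sup (e ` T'))"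
  using CE unfolding canonical_extension_def by blast

lemma e_le_iff: "e a \<le> e b \<longleftrightarrow> a \<le> b"
proof
  assume "e a \<le> e b"
  then have "e (inf a b) = e a" by (simp add: e_inf inf.absorb1)
  then have "inf a b = a" using e_inj by (simp add: inj_eq)
  then show "a \<le> b" by (metis inf.orderI)
next
  assume "a \<le> b" then have "e (inf a b) = e a" by (simp add: inf.absorb1)
  then show "e a \<le> e b" by (metis e_inf inf.orderI)
qed

lemma fin_inf: "finite S \<Longrightarrow> P top \<Longrightarrow> (\<And>x y. P x \<Longrightarrow> P y \<Longrightarrow> P (inf x y)) \<Longrightarrow> (\<forall>s\<in>S. P s)
   \<Longrightarrow> \<exists>m. e m = Inf (e ` S) \<and> P m"
proof (induction S rule: finite_induct)
  case empty then show ?case using e_top by auto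
next
  case (insert x F)
  then obtain m where "e m = Inf (e ` F)" "P m" by auto
  then show ?case using insert by (intro exI[of _ "inf x m"]) (auto simp: e_inf)
qed

lemma fin_sup: "finite S \<Longrightarrow> \<exists>m. e m = Sup (e ` S)"
proof (induction S rule: finite_induct)
  case empty then show ?case using e_bot by auto
next
  case (insert x F)
  then obtain m where "e m = Sup (e ` F)" by auto
  then show ?case by (intro exI[of _ "sup x m"]) (auto simp: e_sup)
qed

lemma e_K: "e a \<in> Kel e" unfolding Kel_def by (rule CollectI, rule exI[of _ "{a}"]) simp
lemma e_O: "e a \<in> Oel e" unfolding Oel_def by (rule CollectI, rule exI[of _ "{a}"]) simp

lemma Jinf_D: "x \<in> Jinf \<Longrightarrow> x = Sup S \<Longrightarrow> x \<in> S"
  unfolding Jinf_def by blast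

lemma Jinf_K: assumes "x \<in> Jinf" shows "x \<in> Kel e"
proof -
  obtain X where X: "X \<subseteq> Kel e" "x = Sup X" using dense_K[of x] by blast
  have "x \<in> X" by (rule Jinf_D[OF assms X(2)])
  then show ?thesis using X(1) by (rule subsetD[rotated])
qed

lemma Jinf_nbot: assumes "x \<in> Jinf" shows "x \<noteq> bot"
proof
  assume "x = bot"
  then have "x = Sup {}" by simp
  from Jinf_D[OF assms this] show False by simp
qed

lemma K_le_O: assumes "k \<in> Kel e" "p \<in> Oel e" "k \<le> p" shows "\<exists>a. k \<le> e a \<and> e a \<le> p"
proof -
  obtain S T where S: "k = Inf (e ` S)" and T: "p = Sup (e ` T)" using assms unfolding Kel_def Oel_def by blast
  obtain S' T' where "finite S'" "S' \<subseteq> S" "finite T'" "T' \<subseteq> T" and le: "Inf (e ` S') \<le> Sup (e ` T')"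
    using compact assms S T by metis
  obtain m where m: "e m = Inf (e ` S')" using fin_inf[of S' "\<lambda>_. True"] \<open>finite S'\<close> by auto
  have "k \<le> e m" using S m \<open>S' \<subseteq> S\<close> by (simp add: Inf_superset_mono image_mono)
  moreover have "e m \<le> p" using m le T \<open>T' \<subseteq> T\<close> by (metis Sup_subset_mono image_mono order_trans)
  ultimately show ?thesis by blast
qed

lemma O_split:
  assumes "k \<in> Kel e" "k \<le> sup (Sup (e ` T1)) (Sup (e ` T2))"
  shows "\<exists>j1 j2. k \<le> sup (e j1) (e j2) \<and> e j1 \<le> Sup (e ` T1) \<and> e j2 \<le> Sup (e ` T2)"
proof -
  obtain S where S: "k = Inf (e ` S)" using assms unfolding Kel_def by blast
  have "k \<le> Sup (e ` (T1 \<union> T2))" using assms by (simp add: Sup_union_distrib image_Un)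
  then obtain S' T' where "finite S'" "S' \<subseteq> S" "finite T'" "T' \<subseteq> T1 \<union> T2" and le: "Inf (e ` S') \<le> Sup (e ` T')"
    using compact S by metis
  obtain j1 where j1: "e j1 = Sup (e ` (T' \<inter> T1))" using fin_sup \<open>finite T'\<close> by blast
  obtain j2 where j2: "e j2 = Sup (e ` (T' - T1))" using fin_sup \<open>finite T'\<close> by blast
  have "k \<le> Inf (e ` S')" using S \<open>S' \<subseteq> S\<close> by (simp add: Inf_superset_mono image_mono)
  also have "\<dots> \<le> Sup (e ` T')" by (rule le)
  also have "\<dots> = Sup (e ` ((T' \<inter> T1) \<union> (T' - T1)))" by (metis Int_Diff_Un)
  also have "\<dots> = sup (e j1) (e j2)" by (simp add: j1 j2 Sup_union_distrib image_Un)
  finally have 1: "k \<le> sup (e j1) (e j2)" .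
  have 2: "e j1 \<le> Sup (e ` T1)" unfolding j1 by (intro Sup_subset_mono image_mono) blast
  have 3: "e j2 \<le> Sup (e ` T2)" unfolding j2 using \<open>T' \<subseteq> T1 \<union> T2\<close> by (intro Sup_subset_mono image_mono) blast
  show ?thesis by (intro exI[of _ j1] exI[of _ j2] conjI 1 2 3)
qed


lemma Kel_Inf: "k \<in> Kel e \<Longrightarrow> \<exists>S. k = Inf (e ` S)" unfolding Kel_def by blast
lemma Oel_Sup: "p \<in> Oel e \<Longrightarrow> \<exists>T. p = Sup (e ` T)" unfolding Oel_def by blast
lemma Kel_I: "Inf (e ` S) \<in> Kel e" unfolding Kel_def by blast
lemma Oel_I: "Sup (e ` S) \<in> Oel e" unfolding Oel_def by blast

lemma e_mono: "a \<le> b \<Longrightarrow> e a \<le> e b" by (simp add: e_le_iff)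

lemma distrib_key:
  assumes S: "k = Inf (e ` S)" and le: "inf k (e a) \<le> p" and p: "p \<in> Oel e"
  shows "\<exists>z c. k \<le> e z \<and> inf z a \<le> c \<and> e c \<le> p"
proof -
  have kk: "inf k (e a) = Inf (e ` insert a S)" using S by (simp add: inf_commute)
  have "inf k (e a) \<in> Kel e" unfolding kk by (rule Kel_I)
  then obtain c where c: "inf k (e a) \<le> e c" "e c \<le> p" using K_le_O le p by blast
  have "Inf (e ` insert a S) \<le> Sup (e ` {c})" using c(1) unfolding kk by simp
  from compact[OF this] obtain S' T' where S': "finite S'" "S' \<subseteq> insert a S" "finite T'" "T' \<subseteq> {c}"
    and le2: "Inf (e ` S') \<le> Sup (e ` T')" by blast
  have "finite (S' - {a})" using S' by simp
  then obtain z where z: "e z = Inf (e ` (S' - {a}))" using fin_inf[of "S' - {a}" "\<lambda>_. True"] by auto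
  have "S' - {a} \<subseteq> S" using S' by blast
  then have "k \<le> e z" unfolding S z by (intro Inf_superset_mono image_mono)
  have "e (inf z a) = inf (e a) (Inf (e ` (S' - {a})))" by (simp add: e_inf z inf_commute)
  also have "\<dots> \<le> Inf (e ` S')"
  proof (rule Inf_greatest)
    fix y assume "y \<in> e ` S'"
    then obtain s where s: "s \<in> S'" "y = e s" by blast
    show "inf (e a) (Inf (e ` (S' - {a}))) \<le> y"
    proof (cases "s = a")
      case True then show ?thesis using s by simp
    next
      case False then have "y \<in> e ` (S' - {a})" using s by blast
      then show ?thesis by (simp add: Inf_lower le_infI2)
    qed
  qed
  also have "\<dots> \<le> Sup (e ` T')" by (rule le2)
  also have "\<dots> \<le> Sup (e ` {c})" using S' by (intro Sup_subset_mono image_mono)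
  also have "\<dots> = e c" by simp
  finally have "inf z a \<le> c" by (simp add: e_le_iff)
  then show ?thesis using \<open>k \<le> e z\<close> c(2) by blast
qed

lemma distrib_K:
  assumes "k \<in> Kel e"
  shows "inf k (sup (e a) (e b)) \<le> sup (inf k (e a)) (inf k (e b))"
proof -
  obtain S where S: "k = Inf (e ` S)" using assms Kel_Inf by blast
  obtain Y where Y: "Y \<subseteq> Oel e" "sup (inf k (e a)) (inf k (e b)) = Inf Y" using dense_O by blast
  have "inf k (sup (e a) (e b)) \<le> Inf Y"
  proof (rule Inf_greatest)
    fix p assume pY: "p \<in> Y"
    then have pO: "p \<in> Oel e" using Y by blast
    have "sup (inf k (e a)) (inf k (e b)) \<le> p" using Y pY by (simp add: Inf_lower)
    then have la: "inf k (e a) \<le> p" and lb: "inf k (e b) \<le> p" by simp_all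
    obtain z1 c1 where 1: "k \<le> e z1" "inf z1 a \<le> c1" "e c1 \<le> p" using distrib_key[OF S la pO] by blast
    obtain z2 c2 where 2: "k \<le> e z2" "inf z2 b \<le> c2" "e c2 \<le> p" using distrib_key[OF S lb pO] by blast
    define z where "z = inf z1 z2"
    have "k \<le> e z" using 1 2 by (simp add: z_def e_inf)
    then have "inf k (sup (e a) (e b)) \<le> e (inf z (sup a b))"
      by (simp add: e_inf e_sup le_infI1 inf_mono)
    also have "\<dots> = e (sup (inf z a) (inf z b))" by (simp add: inf_sup_distrib1)
    also have "\<dots> \<le> e (sup c1 c2)"
    proof (rule e_mono, rule sup_mono)
      show "inf z a \<le> c1" using 1(2) unfolding z_def by (meson inf_le1 inf_mono order_refl order_trans)
      show "inf z b \<le> c2" using 2(2) unfolding z_def by (meson inf_le2 inf_mono order_refl order_trans)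
    qed
    also have "\<dots> \<le> p" using 1(3) 2(3) by (simp add: e_sup)
    finally show "inf k (sup (e a) (e b)) \<le> p" .
  qed
  then show ?thesis using Y by simp
qed

lemma Jinf_prime:
  assumes x: "x \<in> Jinf" and le: "x \<le> sup (e a) (e b)"
  shows "x \<le> e a \<or> x \<le> e b"
proof -
  have "x = inf x (sup (e a) (e b))" using le by (simp add: inf.absorb1)
  also have "\<dots> \<le> sup (inf x (e a)) (inf x (e b))" by (rule distrib_K[OF Jinf_K[OF x]])
  finally have "x \<le> sup (inf x (e a)) (inf x (e b))" .
  then have "x = Sup {inf x (e a), inf x (e b)}" by (simp add: antisym)
  from Jinf_D[OF x this] have "x = inf x (e a) \<or> x = inf x (e b)" by simp
  then show ?thesis by (metis inf.cobounded2)
qed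

lemma prime_fin:
  assumes nb: "x \<noteq> bot" and pr: "\<And>a b. x \<le> sup (e a) (e b) \<Longrightarrow> x \<le> e a \<or> x \<le> e b"
  shows "finite T \<Longrightarrow> x \<le> Sup (e ` T) \<Longrightarrow> \<exists>t\<in>T. x \<le> e t"
proof (induction T rule: finite_induct)
  case empty then show ?case using nb by (simp add: bot_unique)
next
  case (insert t F)
  obtain j where j: "e j = Sup (e ` F)" using fin_sup insert(1) by blast
  have "x \<le> sup (e t) (e j)" using insert(4) j by simp
  then have "x \<le> e t \<or> x \<le> e j" by (rule pr)
  then show ?case
  proof
    assume "x \<le> e t" then show ?thesis by blast
  next
    assume "x \<le> e j" then have "\<exists>t\<in>F. x \<le> e t" using insert(3) j by simp
    then show ?thesis by blast
  qed
qed

lemma Jinf_char: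
  assumes xK: "x \<in> Kel e" and nb: "x \<noteq> bot" and pr: "\<And>a b. x \<le> sup (e a) (e b) \<Longrightarrow> x \<le> e a \<or> x \<le> e b"
  shows "x \<in> Jinf"
  unfolding Jinf_def
proof (intro CollectI allI impI)
  fix S assume xS: "x = Sup S"
  show "x \<in> S"
  proof (rule ccontr)
    assume nS: "x \<notin> S"
    have "\<exists>T. s \<le> Sup (e ` T) \<and> \<not> x \<le> Sup (e ` T)" if sS: "s \<in> S" for s
    proof -
      have sx: "s \<le> x" using xS sS by (simp add: Sup_upper)
      have nxs: "\<not> x \<le> s"
      proof
        assume "x \<le> s" then have "x = s" using sx by (rule antisym)
        then show False using nS sS by simp
      qed
      obtain Y where Y: "Y \<subseteq> Oel e" "s = Inf Y" using dense_O by blast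
      have "\<exists>p\<in>Y. \<not> x \<le> p"
      proof (rule ccontr)
        assume "\<not> (\<exists>p\<in>Y. \<not> x \<le> p)"
        then have "x \<le> Inf Y" by (simp add: le_Inf_iff)
        then show False using nxs Y by simp
      qed
      then obtain p where p: "p \<in> Y" "\<not> x \<le> p" by blast
      obtain T where T: "p = Sup (e ` T)" using Oel_Sup p Y by blast
      have "s \<le> p" using Y p by (simp add: Inf_lower)
      then show ?thesis using T p by blast
    qed
    then obtain g where g: "\<And>s. s \<in> S \<Longrightarrow> s \<le> Sup (e ` g s) \<and> \<not> x \<le> Sup (e ` g s)" by metis
    have "x \<le> Sup (e ` \<Union>(g ` S))"
      unfolding xS
    proof (rule Sup_least)
      fix s assume "s \<in> S"
      then have "s \<le> Sup (e ` g s)" using g by blast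
      also have "\<dots> \<le> Sup (e ` \<Union>(g ` S))" using \<open>s \<in> S\<close> by (intro Sup_subset_mono image_mono) blast
      finally show "s \<le> Sup (e ` \<Union>(g ` S))" .
    qed
    obtain Z where Z: "x = Inf (e ` Z)" using xK Kel_Inf by blast
    have "Inf (e ` Z) \<le> Sup (e ` \<Union>(g ` S))" using \<open>x \<le> Sup (e ` \<Union>(g ` S))\<close> by (simp only: Z)
    from compact[OF this] obtain Z' T' where ZT: "finite Z'" "Z' \<subseteq> Z" "finite T'" "T' \<subseteq> \<Union>(g ` S)"
      and le: "Inf (e ` Z') \<le> Sup (e ` T')" by blast
    have "x \<le> Inf (e ` Z')" unfolding Z using ZT by (intro Inf_superset_mono image_mono)
    then have "x \<le> Sup (e ` T')" using le by (rule order_trans)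
    then obtain t where t: "t \<in> T'" "x \<le> e t" using prime_fin[OF nb pr ZT(3)] by blast
    then obtain s where s: "s \<in> S" "t \<in> g s" using ZT by blast
    have "e t \<le> Sup (e ` g s)" using s by (simp add: Sup_upper)
    with t(2) have "x \<le> Sup (e ` g s)" by (rule order_trans)
    then show False using g s by blast
  qed
qed

lemma Jinf_prime_O:
  assumes x: "x \<in> Jinf" and p: "p \<in> Oel e" and q: "q \<in> Oel e" and le: "x \<le> sup p q"
  shows "x \<le> p \<or> x \<le> q"
proof -
  obtain T1 T2 where T: "p = Sup (e ` T1)" "q = Sup (e ` T2)" using p q Oel_Sup by blast
  obtain j1 j2 where j: "x \<le> sup (e j1) (e j2)" "e j1 \<le> p" "e j2 \<le> q"
    using O_split[OF Jinf_K[OF x]] le T by blast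
  from Jinf_prime[OF x j(1)] show ?thesis using j by (meson order_trans)
qed




lemma RA_top: "ldiv a top = top" using RA unfolding residuation_algebra_def by blast
lemma RA_inf: "ldiv a (inf b c) = inf (ldiv a b) (ldiv a c)" using RA unfolding residuation_algebra_def by blast
lemma RA_res: "b \<le> ldiv a c \<longleftrightarrow> a \<le> rdiv c b" using RA unfolding residuation_algebra_def by blast

lemma ldiv_mono2: "b \<le> c \<Longrightarrow> ldiv a b \<le> ldiv a c"
  by (metis RA_inf inf.absorb_iff1 inf.cobounded2)

lemma ldiv_anti1: assumes "a \<le> a'" shows "ldiv a' c \<le> ldiv a c"
proof -
  have "a' \<le> rdiv c (ldiv a' c)" using RA_res by blast
  then have "a \<le> rdiv c (ldiv a' c)" using assms by (rule order_trans[rotated])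
  then show ?thesis using RA_res by blast
qed

lemma KO_anti1: "k \<le> k' \<Longrightarrow> ldiv_KO e ldiv k' p \<le> ldiv_KO e ldiv k p"
  unfolding ldiv_KO_def by (rule Sup_subset_mono) (auto intro: order_trans)

lemma KO_mono2: "p \<le> p' \<Longrightarrow> ldiv_KO e ldiv k p \<le> ldiv_KO e ldiv k p'"
  unfolding ldiv_KO_def by (rule Sup_subset_mono) (auto intro: order_trans)

lemma KO_upper: "k \<le> e a \<Longrightarrow> e b \<le> p \<Longrightarrow> e (ldiv a b) \<le> ldiv_KO e ldiv k p"
  unfolding ldiv_KO_def by (rule Sup_upper) blast

lemma KO_eq: "ldiv_KO e ldiv k p = Sup (e ` {ldiv a b | a b. k \<le> e a \<and> e b \<le> p})"
  unfolding ldiv_KO_def by (rule arg_cong[where f=Sup]) blast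

lemma KO_O: "ldiv_KO e ldiv k p \<in> Oel e"
  unfolding KO_eq by (rule Oel_I)

lemma pi_KO: assumes "k \<in> Kel e" "p \<in> Oel e" shows "ldiv_pi e ldiv k p = ldiv_KO e ldiv k p"
  unfolding ldiv_pi_def
proof (rule antisym)
  show "Inf {ldiv_KO e ldiv k' p' |k' p'. k' \<in> Kel e \<and> p' \<in> Oel e \<and> k' \<le> k \<and> p \<le> p'} \<le> ldiv_KO e ldiv k p"
    by (rule Inf_lower) (use assms in blast)
  show "ldiv_KO e ldiv k p \<le> Inf {ldiv_KO e ldiv k' p' |k' p'. k' \<in> Kel e \<and> p' \<in> Oel e \<and> k' \<le> k \<and> p \<le> p'}"
  proof (rule Inf_greatest)
    fix y assume "y \<in> {ldiv_KO e ldiv k' p' |k' p'. k' \<in> Kel e \<and> p' \<in> Oel e \<and> k' \<le> k \<and> p \<le> p'}"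
    then obtain k' p' where y: "y = ldiv_KO e ldiv k' p'" "k' \<le> k" "p \<le> p'" by blast
    have "ldiv_KO e ldiv k p \<le> ldiv_KO e ldiv k' p" by (rule KO_anti1[OF y(2)])
    also have "\<dots> \<le> ldiv_KO e ldiv k' p'" by (rule KO_mono2[OF y(3)])
    finally show "ldiv_KO e ldiv k p \<le> y" using y(1) by simp
  qed
qed

lemma fin_W:
  "finite W \<Longrightarrow> W \<subseteq> {ldiv a b | a b. y \<le> e a \<and> e b \<le> p}
    \<Longrightarrow> \<exists>a b. y \<le> e a \<and> e b \<le> p \<and> (\<forall>w\<in>W. w \<le> ldiv a b)"
proof (induction W rule: finite_induct)
  case empty
  show ?case by (rule exI[of _ top], rule exI[of _ bot]) (simp add: e_top e_bot)
next
  case (insert w F)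
  then obtain a b where ab: "y \<le> e a" "e b \<le> p" "\<forall>w\<in>F. w \<le> ldiv a b" by blast
  obtain a1 b1 where w: "w = ldiv a1 b1" "y \<le> e a1" "e b1 \<le> p" using insert(4) by blast
  have mono: "ldiv a' b' \<le> ldiv (inf a a1) (sup b b1)" if "a' = a \<and> b' = b \<or> a' = a1 \<and> b' = b1" for a' b'
  proof -
    have "ldiv a' b' \<le> ldiv (inf a a1) b'" by (rule ldiv_anti1) (use that in auto)
    also have "\<dots> \<le> ldiv (inf a a1) (sup b b1)" by (rule ldiv_mono2) (use that in auto)
    finally show ?thesis .
  qed
  have "y \<le> e (inf a a1)" using ab w by (simp add: e_inf)
  moreover have "e (sup b b1) \<le> p" using ab w by (simp add: e_sup)
  moreover have "\<forall>v\<in>insert w F. v \<le> ldiv (inf a a1) (sup b b1)"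
  proof
    fix v assume "v \<in> insert w F"
    then show "v \<le> ldiv (inf a a1) (sup b b1)"
    proof
      assume "v = w" then show ?thesis using w(1) mono by blast
    next
      assume "v \<in> F" then have "v \<le> ldiv a b" using ab by blast
      then show ?thesis using mono[of a b] by (blast intro: order_trans)
    qed
  qed
  ultimately show ?case by blast
qed

lemma dot_le: "dot u v \<le> w \<longleftrightarrow> v \<le> ldiv_pi e ldiv u w" using dot_adj by blast
lemma dot_le2: "dot u v \<le> w \<longleftrightarrow> u \<le> rdiv_pi e rdiv w v" using dot_adj by blast

lemma dot_mono: assumes "u \<le> u'" "v \<le> v'" shows "dot u v \<le> dot u' v'"
proof -
  have "v' \<le> ldiv_pi e ldiv u' (dot u' v')" using dot_le by blast
  then have "v \<le> ldiv_pi e ldiv u' (dot u' v')" using assms(2) by (rule order_trans[rotated])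
  then have "dot u' v \<le> dot u' v'" using dot_le by blast
  then have "u' \<le> rdiv_pi e rdiv (dot u' v') v" using dot_le2 by blast
  then have "u \<le> rdiv_pi e rdiv (dot u' v') v" using assms(1) by (rule order_trans[rotated])
  then show ?thesis using dot_le2 by blast
qed

lemma dot_K: assumes y: "y \<in> Kel e" and z: "z \<in> Kel e" shows "dot y z \<in> Kel e"
proof -
  define d where "d = dot y z"
  have key: "\<exists>b. d \<le> e b \<and> e b \<le> p" if p: "p \<in> Oel e" and dp: "d \<le> p" for p
  proof -
    define W where "W = {ldiv a b | a b. y \<le> e a \<and> e b \<le> p}"
    have "z \<le> ldiv_pi e ldiv y p" using dp dot_le unfolding d_def by blast
    also have "\<dots> = Sup (e ` W)" unfolding W_def pi_KO[OF y p] by (rule KO_eq)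
    finally have zW: "z \<le> Sup (e ` W)" .
    obtain Z where Z: "z = Inf (e ` Z)" using z Kel_Inf by blast
    have "Inf (e ` Z) \<le> Sup (e ` W)" using zW by (simp only: Z)
    from compact[OF this] obtain Z' W' where ZW: "finite Z'" "Z' \<subseteq> Z" "finite W'" "W' \<subseteq> W"
      and le: "Inf (e ` Z') \<le> Sup (e ` W')" by blast
    obtain c where c: "e c = Inf (e ` Z')" using fin_inf[of Z' "\<lambda>_. True"] ZW(1) by auto
    have zc: "z \<le> e c" unfolding Z c using ZW by (intro Inf_superset_mono image_mono)
    obtain a b where ab: "y \<le> e a" "e b \<le> p" "\<forall>w\<in>W'. w \<le> ldiv a b"
      using fin_W[OF ZW(3)] ZW(4) unfolding W_def by blast
    have "Sup (e ` W') \<le> e (ldiv a b)"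
    proof (rule Sup_least)
      fix v assume "v \<in> e ` W'" then obtain w where "w \<in> W'" "v = e w" by blast
      then show "v \<le> e (ldiv a b)" using ab(3) e_mono by blast
    qed
    then have "e c \<le> e (ldiv a b)" using c le by simp
    also have "\<dots> \<le> ldiv_KO e ldiv (e a) (e b)" by (rule KO_upper) simp_all
    also have "\<dots> = ldiv_pi e ldiv (e a) (e b)" by (rule pi_KO[symmetric]) (simp_all add: e_K e_O)
    finally have "dot (e a) (e c) \<le> e b" using dot_le by blast
    moreover have "d \<le> dot (e a) (e c)" unfolding d_def by (rule dot_mono) (use ab(1) zc in auto)
    ultimately have "d \<le> e b" by (rule order_trans[rotated])
    then show ?thesis using ab(2) by blast
  qed
  obtain Y where Y: "Y \<subseteq> Oel e" "d = Inf Y" using dense_O by blast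
  define B where "B = {b. d \<le> e b}"
  have "d = Inf (e ` B)"
  proof (rule antisym)
    show "d \<le> Inf (e ` B)" unfolding B_def by (rule Inf_greatest) blast
    have "Inf (e ` B) \<le> Inf Y"
    proof (rule Inf_greatest)
      fix p assume pY: "p \<in> Y"
      have "d \<le> p" using Y pY by (simp add: Inf_lower)
      then obtain b where b: "d \<le> e b" "e b \<le> p" using key Y pY by blast
      then have "Inf (e ` B) \<le> e b" unfolding B_def by (simp add: Inf_lower)
      then show "Inf (e ` B) \<le> p" using b(2) by (rule order_trans)
    qed
    then show "Inf (e ` B) \<le> d" using Y by simp
  qed
  then show ?thesis unfolding d_def by (metis Kel_I)
qed




lemma KO2_eq: "sup (ldiv_KO e ldiv x p) (ldiv_KO e ldiv x q)
   = Sup (e ` ({ldiv a b | a b. x \<le> e a \<and> e b \<le> p} \<union> {ldiv a b | a b. x \<le> e a \<and> e b \<le> q}))"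
  unfolding KO_eq by (simp only: image_Un Sup_union_distrib)

lemma get_a':
  assumes le: "e w \<le> sup (ldiv_KO e ldiv x (e b)) (ldiv_KO e ldiv x (e c))"
  shows "\<exists>a'. x \<le> e a' \<and> w \<le> sup (ldiv a' b) (ldiv a' c)"
proof -
  define Wb where "Wb = {ldiv a b' | a b'. x \<le> e a \<and> e b' \<le> e b}"
  define Wc where "Wc = {ldiv a c' | a c'. x \<le> e a \<and> e c' \<le> e c}"
  have "Inf (e ` {w}) \<le> Sup (e ` (Wb \<union> Wc))" using le unfolding KO2_eq Wb_def Wc_def by simp
  from compact[OF this] obtain S' T' where ST: "finite S'" "S' \<subseteq> {w}" "finite T'" "T' \<subseteq> Wb \<union> Wc"
    and le2: "Inf (e ` S') \<le> Sup (e ` T')" by blast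
  obtain a1 b1 where 1: "x \<le> e a1" "e b1 \<le> e b" "\<forall>t\<in>T' \<inter> Wb. t \<le> ldiv a1 b1"
    using fin_W[of "T' \<inter> Wb" x "e b"] ST unfolding Wb_def by blast
  obtain a2 c2 where 2: "x \<le> e a2" "e c2 \<le> e c" "\<forall>t\<in>T' - Wb. t \<le> ldiv a2 c2"
    using fin_W[of "T' - Wb" x "e c"] ST unfolding Wc_def by blast
  define a' where "a' = inf a1 a2"
  have xa: "x \<le> e a'" unfolding a'_def using 1 2 by (simp add: e_inf)
  have bb: "b1 \<le> b" "c2 \<le> c" using 1 2 by (simp_all add: e_le_iff)
  have "\<forall>t\<in>T'. t \<le> sup (ldiv a' b) (ldiv a' c)"
  proof
    fix t assume tT: "t \<in> T'"
    show "t \<le> sup (ldiv a' b) (ldiv a' c)"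
    proof (cases "t \<in> Wb")
      case True
      then have "t \<le> ldiv a1 b1" using 1 tT by blast
      also have "\<dots> \<le> ldiv a' b1" by (rule ldiv_anti1) (simp add: a'_def)
      also have "\<dots> \<le> ldiv a' b" by (rule ldiv_mono2[OF bb(1)])
      finally show ?thesis by (rule le_supI1)
    next
      case False
      then have "t \<le> ldiv a2 c2" using 2 tT by blast
      also have "\<dots> \<le> ldiv a' c2" by (rule ldiv_anti1) (simp add: a'_def)
      also have "\<dots> \<le> ldiv a' c" by (rule ldiv_mono2[OF bb(2)])
      finally show ?thesis by (rule le_supI2)
    qed
  qed
  then have "Sup (e ` T') \<le> e (sup (ldiv a' b) (ldiv a' c))"
    by (intro Sup_least) (auto intro: e_mono)
  moreover have "e w \<le> Inf (e ` S')" using ST(2) by (intro Inf_greatest) auto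
  ultimately have "e w \<le> e (sup (ldiv a' b) (ldiv a' c))" using le2 by (meson order_trans)
  then show ?thesis using xa by (auto simp: e_le_iff)
qed

lemma filter_compact:
  assumes top: "top \<in> F" and inf: "\<And>x y. x \<in> F \<Longrightarrow> y \<in> F \<Longrightarrow> inf x y \<in> F"
    and le: "Inf (e ` F) \<le> Sup (e ` T0)"
  shows "\<exists>m\<in>F. \<exists>T'. finite T' \<and> T' \<subseteq> T0 \<and> e m \<le> Sup (e ` T')"
proof -
  from compact[OF le] obtain F' T' where FT: "finite F'" "F' \<subseteq> F" "finite T'" "T' \<subseteq> T0"
    and le2: "Inf (e ` F') \<le> Sup (e ` T')" by blast
  obtain m where m: "e m = Inf (e ` F')" "m \<in> F"
    using fin_inf[of F' "\<lambda>x. x \<in> F"] FT top inf by blast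
  show ?thesis using m le2 FT by metis
qed




lemma main:
  shows "((\<forall>y\<in>Jinf. \<forall>z\<in>Jinf. dot y z \<in> Jinf \<union> {bot})
          \<longleftrightarrow> (\<forall>a b c x. x \<in> Jinf \<and> x \<le> e a \<longrightarrow>
                 (\<exists>a'. x \<le> e a' \<and> ldiv a (sup b c) \<le> sup (ldiv a' b) (ldiv a' c))))
       \<and> ((\<forall>a b c x. x \<in> Jinf \<and> x \<le> e a \<longrightarrow>
                 (\<exists>a'. x \<le> e a' \<and> ldiv a (sup b c) \<le> sup (ldiv a' b) (ldiv a' c)))
          \<longleftrightarrow> (\<forall>x\<in>Jinf. \<forall>o1\<in>Oel e. \<forall>o2\<in>Oel e.
                 ldiv_pi e ldiv x (sup o1 o2) = sup (ldiv_pi e ldiv x o1) (ldiv_pi e ldiv x o2)))"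
    (is "(?C1 \<longleftrightarrow> ?C2) \<and> (?C2 \<longleftrightarrow> ?C3)")
proof -
  have 23: ?C3 if C2: ?C2
  proof (intro ballI)
    fix x o1 o2 :: 'c assume x: "x \<in> Jinf" and o1: "o1 \<in> Oel e" and o2: "o2 \<in> Oel e"
    obtain T1 T2 where T: "o1 = Sup (e ` T1)" "o2 = Sup (e ` T2)" using o1 o2 Oel_Sup by blast
    have "sup o1 o2 = Sup (e ` (T1 \<union> T2))" unfolding T by (simp only: image_Un Sup_union_distrib)
    then have sO: "sup o1 o2 \<in> Oel e" by (simp only: Oel_I)
    have xK: "x \<in> Kel e" by (rule Jinf_K[OF x])
    have "ldiv_KO e ldiv x (sup o1 o2) \<le> sup (ldiv_KO e ldiv x o1) (ldiv_KO e ldiv x o2)"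
      unfolding KO_eq[of x "sup o1 o2"]
    proof (rule Sup_least)
      fix v assume "v \<in> e ` {ldiv a b |a b. x \<le> e a \<and> e b \<le> sup o1 o2}"
      then obtain a b where ab: "v = e (ldiv a b)" "x \<le> e a" "e b \<le> sup o1 o2" by blast
      obtain j1 j2 where j: "e b \<le> sup (e j1) (e j2)" "e j1 \<le> o1" "e j2 \<le> o2"
        using O_split[OF e_K, of b T1 T2] ab(3) T by blast
      have bj: "b \<le> sup j1 j2" using j(1) by (simp add: e_le_iff[symmetric] e_sup)
      obtain a' where a': "x \<le> e a'" "ldiv a (sup j1 j2) \<le> sup (ldiv a' j1) (ldiv a' j2)"
        using C2 x ab(2) by blast
      have "v \<le> e (ldiv a (sup j1 j2))" unfolding ab(1) by (rule e_mono, rule ldiv_mono2[OF bj])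
      also have "\<dots> \<le> e (sup (ldiv a' j1) (ldiv a' j2))" by (rule e_mono[OF a'(2)])
      also have "\<dots> = sup (e (ldiv a' j1)) (e (ldiv a' j2))" by (rule e_sup)
      also have "\<dots> \<le> sup (ldiv_KO e ldiv x o1) (ldiv_KO e ldiv x o2)"
        by (rule sup_mono; rule KO_upper) (use a'(1) j in auto)
      finally show "v \<le> sup (ldiv_KO e ldiv x o1) (ldiv_KO e ldiv x o2)" .
    qed
    moreover have "sup (ldiv_KO e ldiv x o1) (ldiv_KO e ldiv x o2) \<le> ldiv_KO e ldiv x (sup o1 o2)"
      by (rule sup_least; rule KO_mono2) simp_all
    ultimately have "ldiv_KO e ldiv x (sup o1 o2) = sup (ldiv_KO e ldiv x o1) (ldiv_KO e ldiv x o2)"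
      by (rule antisym)
    then show "ldiv_pi e ldiv x (sup o1 o2) = sup (ldiv_pi e ldiv x o1) (ldiv_pi e ldiv x o2)"
      by (simp only: pi_KO[OF xK sO] pi_KO[OF xK o1] pi_KO[OF xK o2])
  qed
  have C3e: "ldiv_KO e ldiv x (e (sup b c)) = sup (ldiv_KO e ldiv x (e b)) (ldiv_KO e ldiv x (e c))"
    if C3: ?C3 and x: "x \<in> Jinf" for x b c
  proof -
    have xK: "x \<in> Kel e" by (rule Jinf_K[OF x])
    have "ldiv_KO e ldiv x (e (sup b c)) = ldiv_pi e ldiv x (sup (e b) (e c))"
      by (simp only: e_sup[symmetric] pi_KO[OF xK e_O])
    also have "\<dots> = sup (ldiv_pi e ldiv x (e b)) (ldiv_pi e ldiv x (e c))"
      using C3 x e_O by blast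
    also have "\<dots> = sup (ldiv_KO e ldiv x (e b)) (ldiv_KO e ldiv x (e c))"
      by (simp only: pi_KO[OF xK e_O])
    finally show ?thesis .
  qed
  have 32: ?C2 if C3: ?C3
  proof (intro allI impI)
    fix a b c x assume ax: "x \<in> Jinf \<and> x \<le> e a"
    have "e (ldiv a (sup b c)) \<le> ldiv_KO e ldiv x (e (sup b c))" by (rule KO_upper) (use ax in auto)
    also have "\<dots> = sup (ldiv_KO e ldiv x (e b)) (ldiv_KO e ldiv x (e c))" using C3e[OF C3] ax by blast
    finally show "\<exists>a'. x \<le> e a' \<and> ldiv a (sup b c) \<le> sup (ldiv a' b) (ldiv a' c)" by (rule get_a')
  qed
  have 31: ?C1 if C3: ?C3
  proof (intro ballI)
    fix y z :: 'c assume y: "y \<in> Jinf" and z: "z \<in> Jinf"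
    show "dot y z \<in> Jinf \<union> {bot}"
    proof (cases "dot y z = bot")
      case True then show ?thesis by simp
    next
      case False
      have "dot y z \<in> Jinf"
      proof (rule Jinf_char)
        show "dot y z \<in> Kel e" by (rule dot_K[OF Jinf_K[OF y] Jinf_K[OF z]])
        show "dot y z \<noteq> bot" by (rule False)
        fix a b assume "dot y z \<le> sup (e a) (e b)"
        then have "z \<le> ldiv_pi e ldiv y (e (sup a b))" by (simp add: dot_le e_sup)
        then have "z \<le> ldiv_KO e ldiv y (e (sup a b))" by (simp only: pi_KO[OF Jinf_K[OF y] e_O])
        also have "\<dots> = sup (ldiv_KO e ldiv y (e a)) (ldiv_KO e ldiv y (e b))" by (rule C3e[OF C3 y])
        finally have "z \<le> ldiv_KO e ldiv y (e a) \<or> z \<le> ldiv_KO e ldiv y (e b)"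
          by (rule Jinf_prime_O[OF z KO_O KO_O])
        then show "dot y z \<le> e a \<or> dot y z \<le> e b"
          by (simp add: dot_le pi_KO[OF Jinf_K[OF y] e_O])
      qed
      then show ?thesis by simp
    qed
  qed
  have 12: ?C2 if C1: ?C1
  proof (intro allI impI)
    fix a b c x assume ax: "x \<in> Jinf \<and> x \<le> e a"
    then have x: "x \<in> Jinf" and xa: "x \<le> e a" by simp_all
    have xK: "x \<in> Kel e" by (rule Jinf_K[OF x])
    define w where "w = ldiv a (sup b c)"
    define P where "P = sup (ldiv_KO e ldiv x (e b)) (ldiv_KO e ldiv x (e c))"
    define T where "T = {ldiv a b' | a b'. x \<le> e a \<and> e b' \<le> e b} \<union> {ldiv a b' | a b'. x \<le> e a \<and> e b' \<le> e c}"
    have PT: "P = Sup (e ` T)" unfolding P_def T_def by (rule KO2_eq)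
    have "e w \<le> P"
    proof (rule ccontr)
      assume nwP: "\<not> e w \<le> P"
      define I where "I = {t. \<exists>T'. finite T' \<and> T' \<subseteq> T \<and> e t \<le> Sup (e ` T')}"
      have "e bot \<le> Sup (e ` {})" by (simp add: e_bot)
      then have I0: "bot \<in> I" unfolding I_def by (intro CollectI exI[of _ "{}"] conjI) simp_all
      have Isup: "sup t1 t2 \<in> I" if "t1 \<in> I" "t2 \<in> I" for t1 t2
      proof -
        have "\<exists>T1. finite T1 \<and> T1 \<subseteq> T \<and> e t1 \<le> Sup (e ` T1)" using that(1) unfolding I_def by simp
        then obtain T1 where T1: "finite T1" "T1 \<subseteq> T" "e t1 \<le> Sup (e ` T1)" by blast
        have "\<exists>T2. finite T2 \<and> T2 \<subseteq> T \<and> e t2 \<le> Sup (e ` T2)" using that(2) unfolding I_def by simp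
        then obtain T2 where T2: "finite T2" "T2 \<subseteq> T" "e t2 \<le> Sup (e ` T2)" by blast
        have "e (sup t1 t2) = sup (e t1) (e t2)" by (rule e_sup)
        also have "\<dots> \<le> sup (Sup (e ` T1)) (Sup (e ` T2))" by (rule sup_mono[OF T1(3) T2(3)])
        also have "\<dots> = Sup (e ` (T1 \<union> T2))" by (simp only: image_Un Sup_union_distrib)
        finally have le: "e (sup t1 t2) \<le> Sup (e ` (T1 \<union> T2))" .
        have "finite (T1 \<union> T2)" "T1 \<union> T2 \<subseteq> T" using T1 T2 by auto
        then show ?thesis unfolding I_def using le by (intro CollectI exI[of _ "T1 \<union> T2"] conjI)
      qed
      have Idown: "t2 \<in> I" if "t1 \<in> I" "t2 \<le> t1" for t1 t2
      proof -
        have "\<exists>T1. finite T1 \<and> T1 \<subseteq> T \<and> e t1 \<le> Sup (e ` T1)" using that(1) unfolding I_def by simp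
        then obtain T1 where T1: "finite T1" "T1 \<subseteq> T" "e t1 \<le> Sup (e ` T1)" by blast
        have le: "e t2 \<le> Sup (e ` T1)" using e_mono[OF that(2)] T1(3) by (rule order_trans)
        show ?thesis unfolding I_def using le T1(1,2) by (intro CollectI exI[of _ "T1"] conjI)
      qed
      have wI: "w \<notin> I"
      proof
        assume "w \<in> I"
        then obtain T1 where T1: "finite T1" "T1 \<subseteq> T" "e w \<le> Sup (e ` T1)" unfolding I_def by blast
        have "Sup (e ` T1) \<le> P" unfolding PT using T1(2) by (intro Sup_subset_mono image_mono)
        then show False using nwP T1(3) order_trans by blast
      qed
      have "\<exists>F. w \<in> F \<and> top \<in> F \<and> (\<forall>x y. x\<in>F \<longrightarrow> y\<in>F \<longrightarrow> inf x y \<in> F)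
        \<and> (\<forall>x y. x \<in> F \<longrightarrow> x \<le> y \<longrightarrow> y \<in> F) \<and> F \<inter> I = {}
        \<and> (\<forall>x y. sup x y \<in> F \<longrightarrow> x \<in> F \<or> y \<in> F)"
        apply (rule pft)
           apply (rule I0)
          apply (erule (1) Isup)
         apply (erule (1) Idown)
        apply (rule wI)
        done
      then obtain F where F: "w \<in> F" "top \<in> F" "\<forall>x y. x\<in>F \<longrightarrow> y\<in>F \<longrightarrow> inf x y \<in> F"
        "\<forall>x y. x \<in> F \<longrightarrow> x \<le> y \<longrightarrow> y \<in> F" "F \<inter> I = {}" "\<forall>x y. sup x y \<in> F \<longrightarrow> x \<in> F \<or> y \<in> F"
        by (elim exE conjE) (rule that; assumption)
      have Finf: "\<And>x y. x \<in> F \<Longrightarrow> y \<in> F \<Longrightarrow> inf x y \<in> F" using F(3) by blast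
      define z where "z = Inf (e ` F)"
      have zK: "z \<in> Kel e" unfolding z_def by (rule Kel_I)
      have nb: "z \<noteq> bot"
      proof
        assume "z = bot"
        then have "Inf (e ` F) \<le> Sup (e ` {})" unfolding z_def by simp
        from filter_compact[OF F(2) Finf this] obtain m where m: "m \<in> F" "e m \<le> bot" by auto
        then have "m \<in> I" unfolding I_def by (intro CollectI exI[of _ "{}"]) simp
        then show False using m F(5) by blast
      qed
      have zJ: "z \<in> Jinf"
      proof (rule Jinf_char[OF zK nb])
        fix a1 b1 assume "z \<le> sup (e a1) (e b1)"
        then have "Inf (e ` F) \<le> Sup (e ` {sup a1 b1})" unfolding z_def by (simp add: e_sup)
        from filter_compact[OF F(2) Finf this] obtain m T' where m: "m \<in> F" "T' \<subseteq> {sup a1 b1}" "e m \<le> Sup (e ` T')"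
          by blast
        have "Sup (e ` T') \<le> e (sup a1 b1)" using m(2) by (intro Sup_least) auto
        then have "m \<le> sup a1 b1" using m(3) by (simp add: e_le_iff[symmetric])
        then have "sup a1 b1 \<in> F" using m(1) F(4) by blast
        then have "a1 \<in> F \<or> b1 \<in> F" using F(6) by blast
        then show "z \<le> e a1 \<or> z \<le> e b1" unfolding z_def by (auto intro: Inf_lower)
      qed
      have zw: "z \<le> e w" unfolding z_def using F(1) by (simp add: Inf_lower)
      have nzP: "\<not> z \<le> P"
      proof
        assume "z \<le> P"
        then have "Inf (e ` F) \<le> Sup (e ` T)" unfolding z_def PT .
        from filter_compact[OF F(2) Finf this] obtain m where m: "m \<in> F" "m \<in> I"
          unfolding I_def by blast
        then show False using F(5) by blast
      qed
      have "e w \<le> ldiv_KO e ldiv x (e (sup b c))" unfolding w_def by (rule KO_upper[OF xa order_refl])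
      also have "\<dots> = ldiv_pi e ldiv x (sup (e b) (e c))" by (simp only: e_sup[symmetric] pi_KO[OF xK e_O])
      finally have "z \<le> ldiv_pi e ldiv x (sup (e b) (e c))" using zw by (meson order_trans)
      then have d: "dot x z \<le> sup (e b) (e c)" by (simp add: dot_le)
      have "dot x z \<le> e b \<or> dot x z \<le> e c"
      proof (cases "dot x z = bot")
        case True then show ?thesis by simp
      next
        case False
        then have "dot x z \<in> Jinf" using C1 x zJ by blast
        then show ?thesis using Jinf_prime d by blast
      qed
      then have "z \<le> ldiv_KO e ldiv x (e b) \<or> z \<le> ldiv_KO e ldiv x (e c)"
        by (simp add: dot_le pi_KO[OF xK e_O])
      then have "z \<le> P" unfolding P_def by (meson le_supI1 le_supI2)
      then show False using nzP by blast
    qed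
    then show "\<exists>a'. x \<le> e a' \<and> ldiv a (sup b c) \<le> sup (ldiv a' b) (ldiv a' c)"
      unfolding P_def w_def by (rule get_a')
  qed
  show ?thesis
  proof (rule conjI; rule iffI)
    assume ?C1 then show ?C2 by (rule 12)
  next
    assume ?C2 then show ?C1 by (intro 31 23)
  next
    assume ?C2 then show ?C3 by (rule 23)
  next
    assume ?C3 then show ?C2 by (rule 32)
  qed
qed


end

theorem proposition3p1:
  fixes ldiv rdiv :: "'a::{distrib_lattice,bounded_lattice} \<Rightarrow> 'a \<Rightarrow> 'a"
    and e :: "'a \<Rightarrow> 'c::complete_lattice"
    and dot :: "'c \<Rightarrow> 'c \<Rightarrow> 'c"
  assumes RA: "residuation_algebra ldiv rdiv"
    and CE: "canonical_extension e"
    and dot_adj: "\<And>u v w. (v \<le> ldiv_pi e ldiv u w \<longleftrightarrow> dot u v \<le> w)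
                          \<and> (dot u v \<le> w \<longleftrightarrow> u \<le> rdiv_pi e rdiv w v)"
  shows "((\<forall>y\<in>Jinf. \<forall>z\<in>Jinf. dot y z \<in> Jinf \<union> {bot})
          \<longleftrightarrow> (\<forall>a b c x. x \<in> Jinf \<and> x \<le> e a \<longrightarrow>
                 (\<exists>a'. x \<le> e a' \<and> ldiv a (sup b c) \<le> sup (ldiv a' b) (ldiv a' c))))
       \<and> ((\<forall>a b c x. x \<in> Jinf \<and> x \<le> e a \<longrightarrow>
                 (\<exists>a'. x \<le> e a' \<and> ldiv a (sup b c) \<le> sup (ldiv a' b) (ldiv a' c)))
          \<longleftrightarrow> (\<forall>x\<in>Jinf. \<forall>o1\<in>Oel e. \<forall>o2\<in>Oel e.
                 ldiv_pi e ldiv x (sup o1 o2) = sup (ldiv_pi e ldiv x o1) (ldiv_pi e ldiv x o2)))"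
proof -
  interpret setting ldiv rdiv e dot
    by (rule setting.intro[OF RA CE dot_adj])
  show ?thesis by (rule main)
qed

end
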